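(* Let $V$ be a real Banach space and $X\subseteq V$ a convex subspace. Then $X$ has the homotopy fixed point property if and only if $X$ is a singleton.
   Context: A topological space $X$ has the homotopy fixed point property if for every continuous map $f\colon I\times X\to X$, where $I=[0,1]$, there exists a continuous map $p\colon I\to X$ with $f(t,p(t))=p(t)$ for all $t\in I$. *)

theory Defs
  imports "HOL-Analysis.Analysis"
begin

definition homotopy_fixed_point_property :: "'a topology \<Rightarrow> bool" where
  "homotopy_fixed_point_property T \<longleftrightarrow>
     (\<forall>f :: real \<times> 'a \<Rightarrow> 'a.
        continuous_map (prod_topology (top_of_set {0..1}) T) T f \<longrightarrow>
        (\<exists>p :: real \<Rightarrow> 'a. continuous_map (top_of_set {0..1}) T p \<and>
              (\<forall>t\<in>{0..1}. f (t, p t) = p t)))"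

end

theory Submission
  imports Defs
begin

lemma fix_closed:
  fixes p :: "real \<Rightarrow> 'a::real_normed_vector"
  assumes "continuous_on {0..1} p" and "\<And>t. t \<in> {0..<1/2} \<Longrightarrow> p t = a"
  shows "p (1/2) = a"
proof -
  have c: "closed {t \<in> {0..1}. p t = a}"
    by (rule continuous_closed_preimage_constant[OF assms(1)]) auto
  have "{0..<1/2::real} \<subseteq> {t \<in> {0..1}. p t = a}" using assms(2) by auto
  hence "closure {0..<1/2::real} \<subseteq> {t \<in> {0..1}. p t = a}"
    using c closure_minimal by blast
  hence "{0..1/2::real} \<subseteq> {t \<in> {0..1}. p t = a}" by (simp add: closure_atLeastLessThan)
  moreover have "(1/2::real) \<in> {0..1/2}" by simp
  ultimately show ?thesis by blast
qed

lemma fix_closed2: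
  fixes p :: "real \<Rightarrow> 'a::real_normed_vector"
  assumes "continuous_on {0..1} p" and "\<And>t. t \<in> {1/2<..1} \<Longrightarrow> p t = a"
  shows "p (1/2) = a"
proof -
  have c: "closed {t \<in> {0..1}. p t = a}"
    by (rule continuous_closed_preimage_constant[OF assms(1)]) auto
  have "{1/2<..1::real} \<subseteq> {t \<in> {0..1}. p t = a}" using assms(2) by auto
  hence "closure {1/2<..1::real} \<subseteq> {t \<in> {0..1}. p t = a}"
    using c closure_minimal by blast
  hence "{1/2..1::real} \<subseteq> {t \<in> {0..1}. p t = a}" by (simp add: closure_greaterThanAtMost)
  moreover have "(1/2::real) \<in> {1/2..1}" by simp
  ultimately show ?thesis by blast
qed

theorem theorem4p5:
  fixes X :: "'a::banach set"
  assumes "convex X"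
  shows "homotopy_fixed_point_property (top_of_set X) \<longleftrightarrow> (\<exists>x. X = {x})"
proof
  assume H: "homotopy_fixed_point_property (top_of_set X)"
  show "\<exists>x. X = {x}"
  proof (rule ccontr)
    assume ns: "\<nexists>x. X = {x}"
    show False
    proof (cases "X = {}")
      case True
      have "continuous_map (prod_topology (top_of_set {0..1}) (top_of_set X)) (top_of_set X) snd"
        by (auto simp: prod_topology_subtopology_eu continuous_map_subtopology_eu continuous_on_snd
             continuous_on_id)
      then obtain p where "continuous_map (top_of_set {0..1}) (top_of_set X) (p::real\<Rightarrow>'a)"
        using H unfolding homotopy_fixed_point_property_def by blast
      hence "p (0::real) \<in> X" by (auto simp: continuous_map_subtopology_eu)
      thus False using True by auto
    next
      case False
      then obtain a where aX: "a \<in> X" by auto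
      then obtain b where bX: "b \<in> X" and ab: "a \<noteq> b" using ns by blast
      define s where "s x = dist x a / (dist x a + dist x b)" for x
      define g where "g t l = l - max 0 (1/2-t) * l + max 0 (t-1/2) * (1-l)" for t l :: real
      define f where "f = (\<lambda>(t,x). (1 - g t (s x)) *\<^sub>R a + g t (s x) *\<^sub>R b)"
      have pos: "dist x a + dist x b > 0" for x
        using ab by (metis add_nonneg_pos add_pos_nonneg dist_nz zero_le_dist)
      have s01: "0 \<le> s x \<and> s x \<le> 1" for x
        using pos[of x] by (auto simp: s_def divide_simps)
      have g01: "0 \<le> g t l \<and> g t l \<le> 1" if "0 \<le> t" "t \<le> 1" "0 \<le> l" "l \<le> 1" for t l
      proof (cases "t \<le> 1/2")
        case True
        hence "g t l = l * (1/2 + t)" by (simp add: g_def algebra_simps)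
        then show ?thesis using that True by (simp add: mult_le_one)
      next
        case False
        hence "g t l = l + (t - 1/2) * (1 - l)" by (simp add: g_def algebra_simps)
        moreover have "(t - 1/2) * (1 - l) \<le> 1 * (1 - l)"
          by (rule mult_right_mono) (use that in auto)
        ultimately show ?thesis using that False by (auto intro!: mult_nonneg_nonneg)
      qed
      have sseg: "s ((1 - l) *\<^sub>R a + l *\<^sub>R b) = l" if "0 \<le> l" "l \<le> 1" for l
      proof -
        have n: "norm (b - a) > 0" using ab by simp
        have "dist ((1 - l) *\<^sub>R a + l *\<^sub>R b) a = norm (l *\<^sub>R (b - a))"
          by (simp add: dist_norm algebra_simps)
        also have "\<dots> = l * norm (b - a)" using that by simp
        finally have d1: "dist ((1 - l) *\<^sub>R a + l *\<^sub>R b) a = l * norm (b - a)" .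
        have "dist ((1 - l) *\<^sub>R a + l *\<^sub>R b) b = norm ((1 - l) *\<^sub>R (b - a))"
          by (simp add: dist_norm algebra_simps norm_minus_commute)
        also have "\<dots> = (1 - l) * norm (b - a)" using that by simp
        finally have d2: "dist ((1 - l) *\<^sub>R a + l *\<^sub>R b) b = (1 - l) * norm (b - a)" .
        show ?thesis using n unfolding s_def d1 d2 by (simp add: field_simps)
      qed
      have cs: "continuous_on UNIV s"
      proof -
        have "\<forall>x\<in>UNIV. dist x a + dist x b \<noteq> 0" using pos by (metis less_irrefl)
        thus ?thesis unfolding s_def by (intro continuous_intros) auto
      qed
      have cf: "continuous_on ({0..1} \<times> X) f"
        unfolding f_def g_def split_def
        by (intro continuous_intros continuous_on_compose2[OF cs]) auto
      have fX: "f \<in> {0..1} \<times> X \<rightarrow> X"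
      proof
        fix z assume "z \<in> {0..1::real} \<times> X"
        then obtain t x where z: "z = (t,x)" "0 \<le> t" "t \<le> 1" by auto
        show "f z \<in> X" unfolding z f_def using g01[OF z(2,3) conjunct1[OF s01] conjunct2[OF s01]]
          aX bX assms by (auto intro: convexD)
      qed
      have "continuous_map (prod_topology (top_of_set {0..1}) (top_of_set X)) (top_of_set X) f"
        using cf fX by (simp add: prod_topology_subtopology_eu continuous_map_subtopology_eu)
      then obtain p where pc: "continuous_map (top_of_set {0..1}) (top_of_set X) (p::real\<Rightarrow>'a)"
        and pf: "\<forall>t\<in>{0..1}. f (t, p t) = p t"
        using H unfolding homotopy_fixed_point_property_def by blast
      have pco: "continuous_on {0..1} p" using pc by (simp add: continuous_map_subtopology_eu)
      have key: "\<exists>l. p t = (1 - l) *\<^sub>R a + l *\<^sub>R b \<and> l = g t l \<and> 0 \<le> l \<and> l \<le> 1"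
        if "t \<in> {0..1}" for t
      proof -
        define l where "l = g t (s (p t))"
        have l01: "0 \<le> l \<and> l \<le> 1" unfolding l_def using that g01 s01 by auto
        have pt: "p t = (1 - l) *\<^sub>R a + l *\<^sub>R b"
          using pf that unfolding f_def l_def by auto
        have sl: "s (p t) = l" using pt sseg l01 by simp
        have "l = g t l" using l_def sl by metis
        thus ?thesis using pt l01 by blast
      qed
      have A: "p t = a" if tA: "t \<in> {0..<1/2}" for t
      proof -
        obtain l where l: "p t = (1 - l) *\<^sub>R a + l *\<^sub>R b" "l = g t l"
        proof -
          have "t \<in> {0..1}" using tA by auto
          from key[OF this] show ?thesis using that by blast
        qed
        have "l = l * (1/2 + t)" using l(2) that by (simp add: g_def algebra_simps)
        moreover have "l * (1/2 - t) = l - l * (1/2 + t)" by (simp add: algebra_simps)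
        ultimately have "l * (1/2 - t) = 0" by linarith
        moreover have "1/2 - t \<noteq> 0" using tA by auto
        ultimately have "l = 0" by simp
        thus ?thesis using l by simp
      qed
      have B: "p t = b" if tA: "t \<in> {1/2<..1}" for t
      proof -
        obtain l where l: "p t = (1 - l) *\<^sub>R a + l *\<^sub>R b" "l = g t l"
        proof -
          have "t \<in> {0..1}" using tA by auto
          from key[OF this] show ?thesis using that by blast
        qed
        have m1: "max 0 (1/2 - t) = 0" "max 0 (t - 1/2) = t - 1/2" using tA by auto
        have "g t l = l + (t - 1/2) * (1 - l)" unfolding g_def m1 by simp
        hence "l = l + (t - 1/2) * (1 - l)" using l(2) by simp
        hence "(t - 1/2) * (1 - l) = 0" by linarith
        moreover have "t - 1/2 \<noteq> 0" using tA by auto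
        ultimately have "l = 1" by simp
        thus ?thesis using l by simp
      qed
      have "p (1/2) = a" by (rule fix_closed[OF pco A])
      moreover have "p (1/2) = b" by (rule fix_closed2[OF pco B])
      ultimately show False using ab by simp
    qed
  qed
next
  assume "\<exists>x. X = {x}"
  then obtain x where X: "X = {x}" by auto
  show "homotopy_fixed_point_property (top_of_set X)"
    unfolding homotopy_fixed_point_property_def
  proof (intro allI impI)
    fix f :: "real \<times> 'a \<Rightarrow> 'a"
    assume fc: "continuous_map (prod_topology (top_of_set {0..1}) (top_of_set X)) (top_of_set X) f"
    have "f (t, x) = x" if "t \<in> {0..1}" for t
      using fc that X by (auto simp: prod_topology_subtopology_eu continuous_map_subtopology_eu Pi_iff)
    thus "\<exists>p. continuous_map (top_of_set {0..1}) (top_of_set X) p \<and> (\<forall>t\<in>{0..1}. f (t, p t) = p t)"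
      by (intro exI[of _ "\<lambda>_. x"]) (auto simp: X continuous_map_subtopology_eu)
  qed
qed

end
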